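(* Let $p,q\in[1,\infty)$. Without assuming the Objectivity Assumption, the $L(p,q)$-aggregation method satisfies Consensus with score vectors: for every data set and every paper $a$, if all reviewers give $a$ the same recommendation $y$ ($y_{ia}=y$ for all $i$) and the same score vector ($\bar x_{ia}=\bar x_a$ for all $i$), then $s_a=y$.
   Context: Peer-review setting: a finite set $\mathcal{R}$ of reviewers, a finite set $\mathcal{P}$ of papers, and $d\ge1$ criteria. Every reviewer $i$ reviews every paper $a$, giving a score vector $\bar{x}_{ia}\in[0,10]^d$ and a recommendation $y_{ia}\in[0,10]$. A function $h:[0,10]^d\to[0,10]$ is monotonic if $\bar x\le\bar y$ componentwise implies $h(\bar x)\le h(\bar y)$. Standing assumption: each reviewer $i$ has a monotonic $h_i$ with $y_{ia}=h_i(\bar x_{ia})$ for all $a$. Score vectors of different reviewers for the same paper may differ (no Objectivity Assumption). The $L(p,q)$-aggregation method: (1) ERM step: find a monotonic $\hat h$ minimizing $\big[\sum_{i\in\mathcal{R}}\big(\sum_{a\in\mathcal{P}}|y_{ia}-h(\bar x_{ia})|^p\big)^{q/p}\big]^{1/q}$ over monotonic $h$ (only the values $h(\bar x_{ia})$ matter); among minimizers the value vector $(\hat h(\bar x_{ia}))_{i,a}$ of smallest Euclidean norm is chosen; set $\hat y_{ia}=\hat h(\bar x_{ia})$. (2) Aggregation step: the solution $(s_a)_{a\in\mathcal P}$ minimizes $\big[\sum_{i}\big(\sum_{a}|\hat y_{ia}-s_a|^p\big)^{q/p}\big]^{1/q}$ (ties broken by smallest Euclidean norm). *)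

theory Defs
  imports Complex_Main
begin

text \<open>Score vectors are functions from a finite index type 'd of criteria to the reals;
  the order on them is the pointwise (componentwise) order.\<close>

definition score_box :: "('d::finite \<Rightarrow> real) set" where
  "score_box = {v. \<forall>k. 0 \<le> v k \<and> v k \<le> 10}"

definition monotonic :: "(('d::finite \<Rightarrow> real) \<Rightarrow> real) \<Rightarrow> bool" where
  "monotonic h \<longleftrightarrow>
     (\<forall>v\<in>score_box. 0 \<le> h v \<and> h v \<le> 10) \<and>
     (\<forall>u\<in>score_box. \<forall>v\<in>score_box. u \<le> v \<longrightarrow> h u \<le> h v)"

definition Lpq_loss :: "real \<Rightarrow> real \<Rightarrow> 'r set \<Rightarrow> 'p set \<Rightarrow>
    ('r \<Rightarrow> 'p \<Rightarrow> real) \<Rightarrow> ('r \<Rightarrow> 'p \<Rightarrow> real) \<Rightarrow> real" where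
  "Lpq_loss p q R P y v =
     (\<Sum>i\<in>R. (\<Sum>a\<in>P. \<bar>y i a - v i a\<bar> powr p) powr (q / p)) powr (1 / q)"

definition mono_values :: "'r set \<Rightarrow> 'p set \<Rightarrow> ('r \<Rightarrow> 'p \<Rightarrow> ('d::finite \<Rightarrow> real))
    \<Rightarrow> ('r \<Rightarrow> 'p \<Rightarrow> real) set" where
  "mono_values R P x =
     {v. \<exists>h. monotonic h \<and> (\<forall>i\<in>R. \<forall>a\<in>P. v i a = h (x i a))}"

definition val_norm :: "'r set \<Rightarrow> 'p set \<Rightarrow> ('r \<Rightarrow> 'p \<Rightarrow> real) \<Rightarrow> real" where
  "val_norm R P v = sqrt (\<Sum>(i,a)\<in>R \<times> P. (v i a)\<^sup>2)"

definition vec_norm :: "'p set \<Rightarrow> ('p \<Rightarrow> real) \<Rightarrow> real" where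
  "vec_norm P s = sqrt (\<Sum>a\<in>P. (s a)\<^sup>2)"

definition is_erm_output :: "real \<Rightarrow> real \<Rightarrow> 'r set \<Rightarrow> 'p set \<Rightarrow>
    ('r \<Rightarrow> 'p \<Rightarrow> ('d::finite \<Rightarrow> real)) \<Rightarrow> ('r \<Rightarrow> 'p \<Rightarrow> real) \<Rightarrow>
    ('r \<Rightarrow> 'p \<Rightarrow> real) \<Rightarrow> bool" where
  "is_erm_output p q R P x y yhat \<longleftrightarrow>
     yhat \<in> mono_values R P x \<and>
     (\<forall>v\<in>mono_values R P x. Lpq_loss p q R P y yhat \<le> Lpq_loss p q R P y v) \<and>
     (\<forall>v\<in>mono_values R P x. Lpq_loss p q R P y v = Lpq_loss p q R P y yhat
         \<longrightarrow> val_norm R P yhat \<le> val_norm R P v)"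

definition is_agg_output :: "real \<Rightarrow> real \<Rightarrow> 'r set \<Rightarrow> 'p set \<Rightarrow>
    ('r \<Rightarrow> 'p \<Rightarrow> real) \<Rightarrow> ('p \<Rightarrow> real) \<Rightarrow> bool" where
  "is_agg_output p q R P yhat s \<longleftrightarrow>
     (\<forall>t. Lpq_loss p q R P yhat (\<lambda>i a. s a) \<le> Lpq_loss p q R P yhat (\<lambda>i a. t a)) \<and>
     (\<forall>t. Lpq_loss p q R P yhat (\<lambda>i a. t a) = Lpq_loss p q R P yhat (\<lambda>i a. s a)
         \<longrightarrow> vec_norm P s \<le> vec_norm P t)"

definition is_Lpq_output :: "real \<Rightarrow> real \<Rightarrow> 'r set \<Rightarrow> 'p set \<Rightarrow>
    ('r \<Rightarrow> 'p \<Rightarrow> ('d::finite \<Rightarrow> real)) \<Rightarrow> ('r \<Rightarrow> 'p \<Rightarrow> real) \<Rightarrow> ('p \<Rightarrow> real) \<Rightarrow> bool" where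
  "is_Lpq_output p q R P x y s \<longleftrightarrow>
     (\<exists>yhat. is_erm_output p q R P x y yhat \<and> is_agg_output p q R P yhat s)"

end

theory Submission
  imports Defs
begin

lemma loss_strict:
  fixes y v w :: "'r \<Rightarrow> 'p \<Rightarrow> real"
  assumes "finite R" "finite P" "0 < p" "0 < q" "i0 \<in> R" "a \<in> P"
    and le: "\<forall>i\<in>R. \<forall>b\<in>P. \<bar>y i b - v i b\<bar> \<le> \<bar>y i b - w i b\<bar>"
    and lt: "\<bar>y i0 a - v i0 a\<bar> < \<bar>y i0 a - w i0 a\<bar>"
  shows "Lpq_loss p q R P y v < Lpq_loss p q R P y w"
proof -
  have inner: "(\<Sum>b\<in>P. \<bar>y i b - v i b\<bar> powr p) \<le> (\<Sum>b\<in>P. \<bar>y i b - w i b\<bar> powr p)"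
    if "i \<in> R" for i
    using le that by (intro sum_mono powr_mono2) (auto simp: less_imp_le[OF assms(3)])
  have inner_s: "(\<Sum>b\<in>P. \<bar>y i0 b - v i0 b\<bar> powr p) < (\<Sum>b\<in>P. \<bar>y i0 b - w i0 b\<bar> powr p)"
    apply (rule sum_strict_mono_ex1[OF assms(2)])
    using le assms(5) apply (auto intro!: powr_mono2 simp: less_imp_le[OF assms(3)])[1]
    using lt assms(6) assms(3) by (auto intro!: bexI[of _ a] powr_less_mono2)
  have outer: "(\<Sum>i\<in>R. (\<Sum>b\<in>P. \<bar>y i b - v i b\<bar> powr p) powr (q/p))
      < (\<Sum>i\<in>R. (\<Sum>b\<in>P. \<bar>y i b - w i b\<bar> powr p) powr (q/p))"
    apply (rule sum_strict_mono_ex1[OF assms(1)])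
    using inner assms(3,4) apply (auto intro!: powr_mono2 sum_nonneg)[1]
    using inner_s assms(3,4,5) by (auto intro!: bexI[of _ i0] powr_less_mono2 sum_nonneg)
  show ?thesis unfolding Lpq_loss_def
    using outer assms(4) by (auto intro!: powr_less_mono2 sum_nonneg)
qed

lemma mono_le:
  assumes "monotonic g" "u \<in> score_box" "v \<in> score_box" "u \<le> v"
  shows "g u \<le> g v"
  using assms unfolding monotonic_def by blast

lemma mono_range:
  assumes "monotonic g" "v \<in> score_box"
  shows "0 \<le> g v" "g v \<le> 10"
  using assms unfolding monotonic_def by blast+

lemma abs_max_le:
  fixes yv hv c :: real
  assumes "c \<le> yv"
  shows "\<bar>yv - max hv c\<bar> \<le> \<bar>yv - hv\<bar>"
  using assms by (simp add: max_def abs_if)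

lemma abs_min_le:
  fixes yv hv c :: real
  assumes "yv \<le> c"
  shows "\<bar>yv - min hv c\<bar> \<le> \<bar>yv - hv\<bar>"
  using assms by (simp add: min_def abs_if)

theorem proposition4p2:
  fixes p q :: real
    and R :: "'r set" and P :: "'p set"
    and x :: "'r \<Rightarrow> 'p \<Rightarrow> ('d::finite \<Rightarrow> real)"
    and y :: "'r \<Rightarrow> 'p \<Rightarrow> real"
    and s :: "'p \<Rightarrow> real"
    and a :: 'p and xa :: "'d \<Rightarrow> real" and ya :: real
  assumes "1 \<le> p" and "1 \<le> q"
    and "finite R" and "R \<noteq> {}" and "finite P"
    and "\<forall>i\<in>R. \<forall>b\<in>P. x i b \<in> score_box"
    and "\<forall>i\<in>R. \<forall>b\<in>P. 0 \<le> y i b \<and> y i b \<le> 10"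
    and "\<forall>i\<in>R. \<exists>h. monotonic h \<and> (\<forall>b\<in>P. y i b = h (x i b))"
    and "a \<in> P"
    and "\<forall>i\<in>R. y i a = ya" and "\<forall>i\<in>R. x i a = xa"
    and "is_Lpq_output p q R P x y s"
  shows "s a = ya"
proof -
  have p0: "0 < p" and q0: "0 < q" using assms(1,2) by auto
  obtain yhat where erm: "is_erm_output p q R P x y yhat" and agg: "is_agg_output p q R P yhat s"
    using assms(12) unfolding is_Lpq_output_def by blast
  obtain h where hm: "monotonic h" and hy: "\<forall>i\<in>R. \<forall>b\<in>P. yhat i b = h (x i b)"
    using erm unfolding is_erm_output_def mono_values_def by blast
  have hmin: "Lpq_loss p q R P y yhat \<le> Lpq_loss p q R P y v" if "v \<in> mono_values R P x" for v
  proof -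
    have "\<forall>v\<in>mono_values R P x. Lpq_loss p q R P y yhat \<le> Lpq_loss p q R P y v"
      using conjunct1[OF conjunct2[OF erm[unfolded is_erm_output_def]]] .
    then show ?thesis using that by (rule bspec)
  qed
  obtain i0 where i0: "i0 \<in> R" using assms(4) by blast
  have yi0: "y i0 a = ya" using assms(10) i0 by blast
  have xi0: "x i0 a = xa" using assms(11) i0 by blast
  have ya: "0 \<le> ya" "ya \<le> 10" using assms(7) assms(9) i0 yi0 by blast+
  have xab: "xa \<in> score_box" using assms(6) assms(9) i0 xi0 by blast
  have up: "ya \<le> y i b" if "i \<in> R" "b \<in> P" "xa \<le> x i b" for i b
  proof -
    have ex: "\<exists>h. monotonic h \<and> (\<forall>b\<in>P. y i b = h (x i b))" using assms(8) that(1) by (rule bspec)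
    then obtain g where g: "monotonic g" "\<forall>b\<in>P. y i b = g (x i b)" by (elim exE conjE)
    have "g xa \<le> g (x i b)" using mono_le[OF g(1) xab _ that(3)] assms(6) that(1,2) by blast
    moreover have "y i b = g (x i b)" using g(2) that(2) by blast
    moreover have "y i a = g (x i a)" using g(2) assms(9) by blast
    ultimately show ?thesis using that(1) assms(10,11) by simp
  qed
  have down: "y i b \<le> ya" if "i \<in> R" "b \<in> P" "x i b \<le> xa" for i b
  proof -
    have ex: "\<exists>h. monotonic h \<and> (\<forall>b\<in>P. y i b = h (x i b))" using assms(8) that(1) by (rule bspec)
    then obtain g where g: "monotonic g" "\<forall>b\<in>P. y i b = g (x i b)" by (elim exE conjE)
    have "g (x i b) \<le> g xa" using mono_le[OF g(1) _ xab that(3)] assms(6) that(1,2) by blast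
    moreover have "y i b = g (x i b)" using g(2) that(2) by blast
    moreover have "y i a = g (x i a)" using g(2) assms(9) by blast
    ultimately show ?thesis using that(1) assms(10,11) by simp
  qed
  have hxa: "h xa = ya"
  proof (rule ccontr)
    assume ne: "h xa \<noteq> ya"
    show False
    proof (cases "h xa < ya")
      case True
      define h' where "h' v = (if xa \<le> v then max (h v) ya else h v)" for v
      have "monotonic h'"
        unfolding monotonic_def
      proof (intro conjI ballI impI)
        fix v :: "'d \<Rightarrow> real" assume "v \<in> score_box"
        then show "0 \<le> h' v" "h' v \<le> 10" using mono_range[OF hm] ya unfolding h'_def by auto
      next
        fix u v :: "'d \<Rightarrow> real" assume uv: "u \<in> score_box" "v \<in> score_box" "u \<le> v"
        then have huv: "h u \<le> h v" using mono_le[OF hm] by blast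
        show "h' u \<le> h' v"
        proof (cases "xa \<le> u")
          case True
          then have "xa \<le> v" using uv(3) by (rule order_trans)
          then show ?thesis using True huv unfolding h'_def by auto
        next
          case False
          then show ?thesis using huv unfolding h'_def by auto
        qed
      qed
      then have vin: "(\<lambda>i b. h' (x i b)) \<in> mono_values R P x" unfolding mono_values_def by blast
      have "Lpq_loss p q R P y (\<lambda>i b. h' (x i b)) < Lpq_loss p q R P y yhat"
      proof (rule loss_strict[OF assms(3,5) p0 q0 i0 assms(9)])
        show "\<forall>i\<in>R. \<forall>b\<in>P. \<bar>y i b - h' (x i b)\<bar> \<le> \<bar>y i b - yhat i b\<bar>"
        proof (intro ballI)
          fix i b assume ib: "i \<in> R" "b \<in> P"
          show "\<bar>y i b - h' (x i b)\<bar> \<le> \<bar>y i b - yhat i b\<bar>"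
          proof (cases "xa \<le> x i b")
            case True
            then show ?thesis using abs_max_le[OF up[OF ib True]] hy ib unfolding h'_def by simp
          next
            case False
            then show ?thesis using hy ib unfolding h'_def by simp
          qed
        qed
        show "\<bar>y i0 a - h' (x i0 a)\<bar> < \<bar>y i0 a - yhat i0 a\<bar>"
          using True hy i0 assms(9,10,11) unfolding h'_def by auto
      qed
      then show False using hmin[OF vin] by linarith
    next
      case False
      then have F: "ya < h xa" using ne by linarith
      define h' where "h' v = (if v \<le> xa then min (h v) ya else h v)" for v
      have "monotonic h'"
        unfolding monotonic_def
      proof (intro conjI ballI impI)
        fix v :: "'d \<Rightarrow> real" assume "v \<in> score_box"
        then show "0 \<le> h' v" "h' v \<le> 10" using mono_range[OF hm] ya unfolding h'_def by auto
      next
        fix u v :: "'d \<Rightarrow> real" assume uv: "u \<in> score_box" "v \<in> score_box" "u \<le> v"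
        then have huv: "h u \<le> h v" using mono_le[OF hm] by blast
        show "h' u \<le> h' v"
        proof (cases "v \<le> xa")
          case True
          then have "u \<le> xa" using uv(3) by (metis order_trans)
          then show ?thesis using True huv unfolding h'_def by auto
        next
          case False
          then show ?thesis using huv unfolding h'_def by auto
        qed
      qed
      then have vin: "(\<lambda>i b. h' (x i b)) \<in> mono_values R P x" unfolding mono_values_def by blast
      have "Lpq_loss p q R P y (\<lambda>i b. h' (x i b)) < Lpq_loss p q R P y yhat"
      proof (rule loss_strict[OF assms(3,5) p0 q0 i0 assms(9)])
        show "\<forall>i\<in>R. \<forall>b\<in>P. \<bar>y i b - h' (x i b)\<bar> \<le> \<bar>y i b - yhat i b\<bar>"
        proof (intro ballI)
          fix i b assume ib: "i \<in> R" "b \<in> P"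
          show "\<bar>y i b - h' (x i b)\<bar> \<le> \<bar>y i b - yhat i b\<bar>"
          proof (cases "x i b \<le> xa")
            case True
            then show ?thesis using abs_min_le[OF down[OF ib True]] hy ib unfolding h'_def by simp
          next
            case False
            then show ?thesis using hy ib unfolding h'_def by simp
          qed
        qed
        show "\<bar>y i0 a - h' (x i0 a)\<bar> < \<bar>y i0 a - yhat i0 a\<bar>"
          using F hy i0 assms(9,10,11) unfolding h'_def by auto
      qed
      then show False using hmin[OF vin] by linarith
    qed
  qed
  have yh: "\<forall>i\<in>R. yhat i a = ya" using hy hxa assms(9,11) by auto
  show ?thesis
  proof (rule ccontr)
    assume ne: "s a \<noteq> ya"
    define t where "t = s(a := ya)"
    have "Lpq_loss p q R P yhat (\<lambda>i b. t b) < Lpq_loss p q R P yhat (\<lambda>i b. s b)"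
      by (rule loss_strict[OF assms(3,5) p0 q0 i0 assms(9)])
         (use yh ne i0 in \<open>auto simp: t_def\<close>)
    moreover have "Lpq_loss p q R P yhat (\<lambda>i b. s b) \<le> Lpq_loss p q R P yhat (\<lambda>i b. t b)"
      using conjunct1[OF agg[unfolded is_agg_output_def]] by blast
    ultimately show False by linarith
  qed
qed

end
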